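(* Let $r\ge 3$ be an integer and let $x>1$ be a real number such that $\binom{x}{2}=\frac{x(x-1)}{2}$ is a positive integer. Then \[f\left(r,3,\tfrac{x(x-1)}{2}\right)\le \frac{x(x-1)(x-2)}{6}.\]
   Context: $\mathbb{N}^{(s)}$ denotes the family of all $s$-element subsets of $\mathbb{N}$. For integers $0\le k\le r$ and $b\ge 0$, $f(r,k,b)$ denotes the maximum of $|\mathcal{A}|$ over all pairs of families $\mathcal{A}\subset\mathbb{N}^{(r)}$, $\mathcal{B}\subset\mathbb{N}^{(r-1)}$ with $|\mathcal{B}|=b$ such that for every $A\in\mathcal{A}$ there exist $k$ distinct sets $B_1,\dots,B_k\in\mathcal{B}$ with $B_i\subset A$ for all $i$. *)

theory Defs
  imports Complex_Main "HOL-Library.Extended_Real"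
begin

definition ksubsets :: "nat \<Rightarrow> nat set set" where
  "ksubsets s = {S. finite S \<and> card S = s}"

definition admissible :: "nat \<Rightarrow> nat \<Rightarrow> nat \<Rightarrow> nat set set \<Rightarrow> nat set set \<Rightarrow> bool" where
  "admissible r k b \<A> \<B> \<longleftrightarrow>
     \<A> \<subseteq> ksubsets r \<and> \<B> \<subseteq> ksubsets (r - 1) \<and> finite \<B> \<and> card \<B> = b \<and>
     (\<forall>A\<in>\<A>. \<exists>C. C \<subseteq> \<B> \<and> finite C \<and> card C = k \<and> (\<forall>B\<in>C. B \<subseteq> A))"

definition f :: "nat \<Rightarrow> nat \<Rightarrow> nat \<Rightarrow> ereal" where
  "f r k b = Sup {ereal (real (card \<A>)) | \<A> \<B>. finite \<A> \<and> admissible r k b \<A> \<B>}"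

end

theory Submission
  imports Defs
begin

definition zz :: "real \<Rightarrow> real" where "zz b = (1 + sqrt (1 + 8*b)) / 2"
definition phi :: "real \<Rightarrow> real" where "phi b = zz b * (zz b - 1) * (zz b - 2) / 6"

lemma zz_prop: assumes "b \<ge> 0" shows "zz b * (zz b - 1) = 2*b" "zz b \<ge> 1"
proof -
  have s: "sqrt (1+8*b) ^ 2 = 1 + 8*b" using assms by simp
  show "zz b * (zz b - 1) = 2*b" unfolding zz_def using s by (simp add: field_simps power2_eq_square)
  have "sqrt (1+8*b) \<ge> 1" using assms by simp
  then show "zz b \<ge> 1" unfolding zz_def by simp
qed

lemma zz_unique: assumes "s \<ge> 1/2" "s*(s-1) = 2*b" shows "zz b = s"
proof -
  have "1 + 8*b = (2*s-1)^2" using assms(2) by (simp add: power2_eq_square algebra_simps)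
  then have "sqrt (1+8*b) = 2*s - 1" using assms(1) by simp
  then show ?thesis unfolding zz_def by simp
qed

lemma phi_zero: "phi 0 = 0"
  using zz_unique[of 1 0] by (simp add: phi_def)

lemma phi_nonneg: assumes "b \<ge> 1 \<or> b = 0" shows "phi b \<ge> 0"
proof (cases "b = 0")
  case True then show ?thesis by (simp add: phi_zero)
next
  case False
  then have b: "b \<ge> 1" using assms by auto
  have "sqrt (1+8*b) \<ge> sqrt 9" using b by (subst real_sqrt_le_iff) simp
  then have "sqrt (1+8*b) \<ge> 3" by simp
  then have "zz b \<ge> 2" unfolding zz_def by simp
  then show ?thesis unfolding phi_def by simp
qed


lemma aux1: fixes A1 A2 B R :: real
  assumes "4*(A1 - A2) - 12*B = R" "0 \<le> R" shows "B/2 \<le> A1/6 - A2/6"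
  using assms by argo

lemma aux3: fixes A1 A2 B C R :: real
  assumes "12*(A1 - A2) - 12*B - 24*C = R" "0 \<le> R" shows "B/6 + C/3 \<le> A1/6 - A2/6"
  using assms by argo

lemma case1: fixes x y t d :: real
  assumes "x = y + t" "0 \<le> t" "t \<le> 1" "y \<ge> 1" "2*d = x*(x-1) - y*(y-1)"
  shows "d*(d-1)/2 \<le> x*(x-1)*(x-2)/6 - y*(y-1)*(y-2)/6"
proof -
  have e: "4*(x*(x-1)*(x-2) - y*(y-1)*(y-2)) - 12*(d*(d-1)) = 2*t*((1-t)*(3*x-2-2*t)) + 3*(t*(2*y+t-1))*((1-t)*(2*x-2-t))"
    using assms(1,5) by algebra
  have "0 \<le> 2*t*((1-t)*(3*x-2-2*t)) + 3*(t*(2*y+t-1))*((1-t)*(2*x-2-t))"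
    using assms by (intro add_nonneg_nonneg mult_nonneg_nonneg) auto
  then show ?thesis using e by (intro aux1) 
qed

lemma case3: fixes x y t d :: real
  assumes "x = y + t" "1 \<le> t" "t \<le> 2" "y \<ge> 1" "2*d = x*(x-1) - y*(y-1)"
  shows "d*(d-1)/6 + y*(y-1)/3 \<le> x*(x-1)*(x-2)/6 - y*(y-1)*(y-2)/6"
proof -
  have e: "12*(x*(x-1)*(x-2) - y*(y-1)*(y-2)) - 12*(d*(d-1)) - 24*(y*(y-1))
   = 3*((t-1)*(2-t))*(4*(y*y-1) + 4*(t-1)*(y-1) + t*t + t)"
    using assms(1,5) by algebra
  have "1 \<le> y*y" using assms(4) by (metis mult_mono' mult_1 zero_le_one)
  then have "0 \<le> 3*((t-1)*(2-t))*(4*(y*y-1) + 4*(t-1)*(y-1) + t*t + t)"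
    using assms by (intro add_nonneg_nonneg mult_nonneg_nonneg) auto
  then show ?thesis using e by (intro aux3)
qed


lemma aux4: fixes a b R :: real assumes "4*(a - b) = R" "0 \<le> R" shows "b \<le> a"
  using assms by argo

lemma case2: fixes x y z d K v s :: real
  assumes "v = y - 1" "s = x - y - 2" "v \<ge> 0" "s \<ge> 0"
    "2*d = x*(x-1) - y*(y-1)" "6*K = x*(x-1)*(x-2) - (y+1)*y*(y-1)"
    "z \<ge> 1" "z*(z-1) = 2*d"
  shows "z*(z-1)*(z-2)/6 \<le> K"
proof -
  have y: "y = v + 1" and x: "x = v + s + 3" using assms by auto
  have dv: "2*d = 6 + 5*s + s^2 + 4*v + 2*v*s" using assms(5) x y by algebra
  have Kv: "6*K = 6 + 11*s + 6*s^2 + s^3 + 9*v + 12*v*s + 3*v*s^2 + 3*v^2 + 3*v^2*s"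
    using assms(6) x y by algebra
  have "0 \<le> 5*s + s^2 + 4*v + 2*v*s" using assms by (intro add_nonneg_nonneg mult_nonneg_nonneg) auto
  then have dpos: "d > 0" using dv by argo
  have "0 \<le> 11*s + 6*s^2 + s^3 + 9*v + 12*v*s + 3*v*s^2 + 3*v^2 + 3*v^2*s"
    using assms by (intro add_nonneg_nonneg mult_nonneg_nonneg zero_le_power) auto
  then have K0: "K \<ge> 0" using Kv by argo
  have E: "4*((3*K+2*d)*(3*K+d) - 2*d^3) = 6*v + 53*v*s + 59*v*s^2 + 23*v*s^3 + 3*v*s^4
     + 23*v^2 + 119*v^2*s + 110*v^2*s^2 + 33*v^2*s^3 + 3*v^2*s^4
     + 26*v^3 + 84*v^3*s + 60*v^3*s^2 + 10*v^3*s^3 + 9*v^4 + 18*v^4*s + 9*v^4*s^2"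
    using dv Kv by algebra
  have "0 \<le> 6*v + 53*v*s + 59*v*s^2 + 23*v*s^3 + 3*v*s^4
     + 23*v^2 + 119*v^2*s + 110*v^2*s^2 + 33*v^2*s^3 + 3*v^2*s^4
     + 26*v^3 + 84*v^3*s + 60*v^3*s^2 + 10*v^3*s^3 + 9*v^4 + 18*v^4*s + 9*v^4*s^2"
    using assms by (intro add_nonneg_nonneg mult_nonneg_nonneg zero_le_power) auto
  then have E0: "2*d^3 \<le> (3*K+2*d)*(3*K+d)" using E aux4 by blast
  define w where "w = 3*K/d + 2"
  have w2: "w \<ge> 2" unfolding w_def using K0 dpos by simp
  have wd: "w*d = 3*K + 2*d" unfolding w_def using dpos by (simp add: field_simps)
  have "w*(w-1)*d^2 = (w*d)*(w*d - d)" by (simp add: algebra_simps power2_eq_square)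
  also have "\<dots> = (3*K+2*d)*(3*K+d)" unfolding wd by simp
  finally have "2*d*d^2 \<le> w*(w-1)*d^2" using E0 by (simp add: power3_eq_cube power2_eq_square mult.assoc)
  then have ww: "2*d \<le> w*(w-1)" using dpos by (simp add: mult_le_cancel_right)
  have zw: "z \<le> w"
  proof (rule ccontr)
    assume "\<not> z \<le> w"
    then have zw': "z - w > 0" by simp
    have "z*(z-1) - w*(w-1) = (z-w)*(z+w-1)" by (simp add: algebra_simps)
    moreover have "(z-w)*(z+w-1) > 0" using zw' w2 assms(7) by (intro mult_pos_pos) auto
    ultimately show False using ww assms(8) by argo
  qed
  have "z*(z-1)*(z-2)/6 = d*(z-2)/3" using assms(8) by (simp add: field_simps)
  also have "\<dots> \<le> d*(w-2)/3" using zw dpos by (simp add: divide_right_mono mult_left_mono)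
  also have "\<dots> = K" unfolding w_def using dpos by (simp add: field_simps)
  finally show ?thesis .
qed


lemma auxK1: fixes D X Y a c :: real
  assumes "D \<le> X - Y" "3*a + c \<le> D" "0 \<le> a" shows "Y + a + c \<le> X"
  using assms by linarith

lemma auxK2: fixes P Q X Y a c Bd :: real
  assumes "P/6 + Q/3 \<le> X - Y" "3*a + c \<le> P/2" "c \<le> Bd" "Bd = Q/2" shows "Y + a + c \<le> X"
  using assms by linarith

lemma auxK3: fixes Z X W Y Q a c Bd :: real
  assumes "Z/6 \<le> (X - W)/6" "W = Y + 3*Q" "a \<le> Z/6" "c \<le> Bd" "Bd = Q/2" shows "Y/6 + a + c \<le> X/6"
  using assms by argo

lemma key: fixes b d \<alpha> \<beta> :: real
  assumes "0 \<le> d" "d \<le> b" "0 \<le> \<alpha>" "0 \<le> \<beta>" "\<alpha> \<le> phi d" "\<beta> \<le> b - d"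
    "3*\<alpha> + \<beta> \<le> d*(d-1)/2"
  shows "phi (b-d) + \<alpha> + \<beta> \<le> phi b"
proof -
  define x where "x = zz b"
  define y where "y = zz (b-d)"
  define z where "z = zz d"
  have x2: "x*(x-1) = 2*b" "x \<ge> 1" using zz_prop[of b] assms unfolding x_def by auto
  have y2: "y*(y-1) = 2*(b-d)" "y \<ge> 1" using zz_prop[of "b-d"] assms unfolding y_def by auto
  have z2: "z*(z-1) = 2*d" "z \<ge> 1" using zz_prop[of d] assms unfolding z_def by auto
  have pb: "phi b = x*(x-1)*(x-2)/6" unfolding phi_def x_def ..
  have pbd: "phi (b-d) = y*(y-1)*(y-2)/6" unfolding phi_def y_def ..
  have pd: "phi d = z*(z-1)*(z-2)/6" unfolding phi_def z_def ..
  have dxy: "2*d = x*(x-1) - y*(y-1)" unfolding x2(1) y2(1) by simp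
  have bd: "b - d = y*(y-1)/2" unfolding y2(1) by simp
  have yx: "y \<le> x"
  proof (rule ccontr)
    assume "\<not> y \<le> x"
    then have "y - x > 0" by simp
    moreover have "y*(y-1) - x*(x-1) = (y-x)*(y+x-1)" by (simp add: algebra_simps)
    moreover have "y + x - 1 > 0" using x2 y2 by simp
    ultimately have "y*(y-1) - x*(x-1) > 0" by simp
    then show False unfolding x2(1) y2(1) using assms by simp
  qed
  consider "x - y \<le> 1" | "1 \<le> x - y" "x - y \<le> 2" | "x - y \<ge> 2" by linarith
  then show ?thesis
  proof cases
    case 1
    have H: "d*(d-1)/2 \<le> x*(x-1)*(x-2)/6 - y*(y-1)*(y-2)/6"
      by (rule case1[of x y "x-y" d, OF _ _ _ _ dxy]) (use 1 yx y2 in linarith)+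
    show ?thesis unfolding pb pbd by (rule auxK1[OF H assms(7) assms(3)])
  next
    case 2
    have H: "d*(d-1)/6 + y*(y-1)/3 \<le> x*(x-1)*(x-2)/6 - y*(y-1)*(y-2)/6"
      by (rule case3[of x y "x-y" d, OF _ _ _ _ dxy]) (use 2 y2 in linarith)+
    show ?thesis unfolding pb pbd by (rule auxK2[OF H assms(7) assms(6) bd])
  next
    case 3
    have H: "z*(z-1)*(z-2)/6 \<le> (x*(x-1)*(x-2) - (y+1)*y*(y-1))/6"
      apply (rule case2[of "y-1" y "x-y-2" x d "(x*(x-1)*(x-2) - (y+1)*y*(y-1))/6" z, OF refl refl _ _ dxy _ z2(2) z2(1)])
        apply (use 3 y2 in linarith)
       apply (use 3 y2 in linarith)
      apply simp
      done
    have W: "(y+1)*y*(y-1) = y*(y-1)*(y-2) + 3*(y*(y-1))" by (simp add: algebra_simps)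
    show ?thesis unfolding pb pbd by (rule auxK3[OF H W assms(5)[unfolded pd] assms(6) bd])
  qed
qed


definition good :: "nat \<Rightarrow> nat set set \<Rightarrow> nat set set \<Rightarrow> bool" where
  "good r AA BB \<longleftrightarrow> finite BB \<and> (\<forall>B\<in>BB. finite B \<and> card B = r - 1) \<and> finite AA \<and>
     (\<forall>A\<in>AA. finite A \<and> card A = r \<and> (\<exists>C. C \<subseteq> BB \<and> card C = 3 \<and> (\<forall>B\<in>C. B \<subseteq> A)))"

lemma eq_minus:
  assumes "finite A" "card A = r" "B \<subseteq> A" "card B = r - 1" "u \<in> A" "u \<notin> B"
  shows "B = A - {u}"
proof -
  have "B \<subseteq> A - {u}" using assms by auto
  moreover have "card (A - {u}) = r - 1" using assms by simp
  ultimately show ?thesis using assms by (metis card_seteq finite_Diff order_refl)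
qed

lemma union_eq:
  assumes "finite A" "card A = r" "B1 \<subseteq> A" "B2 \<subseteq> A" "card B1 = r - 1" "card B2 = r - 1" "B1 \<noteq> B2" "r \<ge> 1"
  shows "B1 \<union> B2 = A"
proof -
  have f: "finite B1" "finite B2" using assms finite_subset by auto
  have "\<not> B2 \<subseteq> B1"
  proof
    assume "B2 \<subseteq> B1"
    then have "B2 = B1" using card_seteq[of B1 B2] f assms by simp
    then show False using assms by simp
  qed
  then have "B1 \<subset> B1 \<union> B2" by auto
  then have "card B1 < card (B1 \<union> B2)" using f by (simp add: psubset_card_mono)
  then have "card A \<le> card (B1 \<union> B2)" using assms by simp
  moreover have "B1 \<union> B2 \<subseteq> A" using assms by simp
  ultimately show ?thesis using assms card_seteq by blast
qed

lemma r_ge3: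
  assumes "good r AA BB" "A \<in> AA"
  shows "r \<ge> 3"
proof -
  obtain C where C: "C \<subseteq> BB" "card C = 3" "\<forall>B\<in>C. B \<subseteq> A" using assms unfolding good_def by blast
  have fA: "finite A" "card A = r" using assms unfolding good_def by auto
  have "C \<subseteq> {B. B \<subseteq> A \<and> card B = r - 1}" using C assms unfolding good_def by auto
  then have "card C \<le> card {B. B \<subseteq> A \<and> card B = r - 1}"
    using fA by (intro card_mono) auto
  also have "\<dots> = r choose (r - 1)" using n_subsets[OF fA(1), of "r - 1"] fA(2) by simp
  finally have "3 \<le> r choose (r - 1)" using C by simp
  then show ?thesis
    by (cases "r = 0 \<or> r = 1 \<or> r = 2") (auto simp: numeral_2_eq_2)
qed

lemma real_choose2: "real (n choose 2) = real n * (real n - 1) / 2"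
proof (induction n)
  case 0
  then show ?case by simp
next
  case (Suc n)
  have "(Suc n) choose 2 = (n choose 1) + (n choose 2)"
    using binomial_Suc_Suc[of n 1] by (simp add: numeral_2_eq_2)
  then have "real ((Suc n) choose 2) = real n + real (n choose 2)" by simp
  then show ?case using Suc.IH by (simp add: field_simps)
qed

lemma main: "good r AA BB \<Longrightarrow> real (card AA) \<le> phi (real (card BB))"
proof (induction "r + card BB" arbitrary: r AA BB rule: less_induct)
  case less
  have finBB: "finite BB" and Bc: "\<And>B. B \<in> BB \<Longrightarrow> finite B \<and> card B = r - 1"
    and finAA: "finite AA" and Ac: "\<And>A. A \<in> AA \<Longrightarrow> finite A \<and> card A = r"
    and AC: "\<And>A. A \<in> AA \<Longrightarrow> \<exists>C. C \<subseteq> BB \<and> card C = 3 \<and> (\<forall>B\<in>C. B \<subseteq> A)"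
    using less.prems unfolding good_def by auto
  show ?case
  proof (cases "AA = {}")
    case True
    have "phi (real (card BB)) \<ge> 0" by (intro phi_nonneg) auto
    then show ?thesis using True by simp
  next
    case False
    then obtain A0 where A0: "A0 \<in> AA" by auto
    have r3: "r \<ge> 3" using r_ge3 less.prems A0 by blast
    have "card A0 = r" using Ac A0 by auto
    then have "A0 \<noteq> {}" using r3 by auto
    then obtain u where u: "u \<in> A0" by auto
    define Bu where "Bu = {B\<in>BB. u \<in> B}"
    define Bn where "Bn = {B\<in>BB. u \<notin> B}"
    define d where "d = card Bu"
    have finBu: "finite Bu" "finite Bn" unfolding Bu_def Bn_def using finBB by auto
    have "BB = Bu \<union> Bn" "Bu \<inter> Bn = {}" unfolding Bu_def Bn_def by auto
    then have cardBB: "card BB = d + card Bn" unfolding d_def using finBu card_Un_disjoint by metis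
    define A1 where "A1 = {A\<in>AA. u \<notin> A}"
    define A2 where "A2 = {A\<in>AA. u \<in> A \<and> A - {u} \<in> BB}"
    define A3 where "A3 = {A\<in>AA. u \<in> A \<and> A - {u} \<notin> BB}"
    have finA: "finite A1" "finite A2" "finite A3" unfolding A1_def A2_def A3_def using finAA by auto
    have "AA = A1 \<union> (A2 \<union> A3)" unfolding A1_def A2_def A3_def by auto
    moreover have "A1 \<inter> (A2 \<union> A3) = {}" "A2 \<inter> A3 = {}" unfolding A1_def A2_def A3_def by auto
    ultimately have cardAA: "card AA = card A1 + card A2 + card A3"
      using finA by (simp add: card_Un_disjoint)
    have notu: "B = A - {u}" if "A \<in> AA" "B \<in> BB" "B \<subseteq> A" "u \<in> A" "u \<notin> B" for A B
      using eq_minus[of A r B u] Ac[OF that(1)] Bc[OF that(2)] that by blast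
    obtain C0 where C0: "C0 \<subseteq> BB" "card C0 = 3" "\<forall>B\<in>C0. B \<subseteq> A0" using AC[OF A0] by blast
    have "\<exists>B\<in>C0. u \<in> B"
    proof (rule ccontr)
      assume nb: "\<not> (\<exists>B\<in>C0. u \<in> B)"
      have "C0 \<subseteq> {A0 - {u}}"
      proof
        fix B assume B: "B \<in> C0"
        then have "B = A0 - {u}" using notu[of A0 B] A0 C0 u nb by blast
        then show "B \<in> {A0 - {u}}" by simp
      qed
      then have "card C0 \<le> card {A0 - {u}}" by (intro card_mono) auto
      then show False using C0 by simp
    qed
    then have "Bu \<noteq> {}" unfolding Bu_def using C0 by auto
    then have d1: "d \<ge> 1" unfolding d_def using finBu by (simp add: Suc_le_eq card_gt_0_iff)
    have dle: "d \<le> card BB" using cardBB by simp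
    have gA1: "good r A1 Bn"
      unfolding good_def
    proof (intro conjI)
      show "finite Bn" using finBu by simp
      show "finite A1" using finA by simp
      show "\<forall>B\<in>Bn. finite B \<and> card B = r - 1" using Bc unfolding Bn_def by auto
      show "\<forall>A\<in>A1. finite A \<and> card A = r \<and> (\<exists>C. C \<subseteq> Bn \<and> card C = 3 \<and> (\<forall>B\<in>C. B \<subseteq> A))"
      proof
        fix A assume A: "A \<in> A1"
        then have AAA: "A \<in> AA" "u \<notin> A" unfolding A1_def by auto
        obtain C where C: "C \<subseteq> BB" "card C = 3" "\<forall>B\<in>C. B \<subseteq> A" using AC[OF AAA(1)] by blast
        have "C \<subseteq> Bn" using C AAA unfolding Bn_def by auto
        then show "finite A \<and> card A = r \<and> (\<exists>C. C \<subseteq> Bn \<and> card C = 3 \<and> (\<forall>B\<in>C. B \<subseteq> A))"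
          using C Ac[OF AAA(1)] by blast
      qed
    qed
    have "r + card Bn < r + card BB" using cardBB d1 by simp
    then have c1: "real (card A1) \<le> phi (real (card Bn))"
      by (rule less.hyps[OF _ gA1])
    have c2: "card A2 \<le> card Bn"
    proof (rule card_inj_on_le[where f = "\<lambda>A. A - {u}"])
      show "inj_on (\<lambda>A. A - {u}) A2" unfolding A2_def inj_on_def by (metis insert_Diff mem_Collect_eq)
      show "(\<lambda>A. A - {u}) ` A2 \<subseteq> Bn" unfolding A2_def Bn_def by auto
      show "finite Bn" using finBu by simp
    qed
    have A3C: "\<exists>C. C \<subseteq> Bu \<and> card C = 3 \<and> (\<forall>B\<in>C. B \<subseteq> A)" if A: "A \<in> A3" for A
    proof -
      have AAA: "A \<in> AA" "u \<in> A" "A - {u} \<notin> BB" using A unfolding A3_def by auto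
      obtain C where C: "C \<subseteq> BB" "card C = 3" "\<forall>B\<in>C. B \<subseteq> A" using AC[OF AAA(1)] by blast
      have "\<forall>B\<in>C. u \<in> B"
      proof
        fix B assume B: "B \<in> C"
        show "u \<in> B"
        proof (rule ccontr)
          assume "u \<notin> B"
          then have "B = A - {u}" using notu[of A B] AAA B C by blast
          then show False using AAA B C by auto
        qed
      qed
      then have "C \<subseteq> Bu" using C unfolding Bu_def by blast
      then show ?thesis using C by blast
    qed
    define A3' where "A3' = (\<lambda>A. A - {u}) ` A3"
    define L where "L = (\<lambda>B. B - {u}) ` Bu"
    have injBu: "inj_on (\<lambda>B. B - {u}) Bu" unfolding Bu_def inj_on_def by (metis insert_Diff mem_Collect_eq)
    have injA3: "inj_on (\<lambda>A. A - {u}) A3" unfolding A3_def inj_on_def by (metis insert_Diff mem_Collect_eq)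
    have cardL: "card L = d" unfolding L_def d_def using injBu by (simp add: card_image)
    have cardA3: "card A3' = card A3" unfolding A3'_def using injA3 by (simp add: card_image)
    have gA3: "good (r - 1) A3' L"
      unfolding good_def
    proof (intro conjI)
      show "finite L" unfolding L_def using finBu by simp
      show "finite A3'" unfolding A3'_def using finA by simp
      show "\<forall>B'\<in>L. finite B' \<and> card B' = r - 1 - 1"
      proof
        fix B' assume "B' \<in> L"
        then obtain B where B: "B \<in> Bu" "B' = B - {u}" unfolding L_def by auto
        then have "B \<in> BB" "u \<in> B" unfolding Bu_def by auto
        then show "finite B' \<and> card B' = r - 1 - 1" using Bc B by auto
      qed
      show "\<forall>A'\<in>A3'. finite A' \<and> card A' = r - 1 \<and> (\<exists>C. C \<subseteq> L \<and> card C = 3 \<and> (\<forall>B\<in>C. B \<subseteq> A'))"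
      proof
        fix A' assume "A' \<in> A3'"
        then obtain A where A: "A \<in> A3" "A' = A - {u}" unfolding A3'_def by auto
        have AAA: "A \<in> AA" "u \<in> A" using A unfolding A3_def by auto
        obtain C where C: "C \<subseteq> Bu" "card C = 3" "\<forall>B\<in>C. B \<subseteq> A" using A3C[OF A(1)] by blast
        have "inj_on (\<lambda>B. B - {u}) C" using inj_on_subset[OF injBu C(1)] .
        then have "card ((\<lambda>B. B - {u}) ` C) = 3" using C by (simp add: card_image)
        moreover have "(\<lambda>B. B - {u}) ` C \<subseteq> L" unfolding L_def using C by auto
        moreover have "\<forall>B\<in>(\<lambda>B. B - {u}) ` C. B \<subseteq> A'" using C A by auto
        moreover have "finite A' \<and> card A' = r - 1" using A AAA Ac[OF AAA(1)] by auto
        ultimately show "finite A' \<and> card A' = r - 1 \<and> (\<exists>C. C \<subseteq> L \<and> card C = 3 \<and> (\<forall>B\<in>C. B \<subseteq> A'))"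
          by blast
      qed
    qed
    have "r - 1 + card L < r + card BB" using cardL dle r3 by simp
    then have "real (card A3') \<le> phi (real (card L))" by (rule less.hyps[OF _ gA3])
    then have c3: "real (card A3) \<le> phi (real d)" using cardL cardA3 by simp
    define Q where "Q A = {S. S \<subseteq> Bu \<and> card S = 2 \<and> (\<forall>B\<in>S. B \<subseteq> A)}" for A
    have finQ: "finite (Q A)" for A
      by (rule finite_subset[of _ "Pow Bu"]) (use finBu in \<open>auto simp: Q_def\<close>)
    have disj: "Q A \<inter> Q A' = {}" if AA': "A \<in> AA" "A' \<in> AA" "A \<noteq> A'" for A A'
    proof (rule ccontr)
      assume "Q A \<inter> Q A' \<noteq> {}"
      then obtain S where S: "S \<in> Q A" "S \<in> Q A'" by auto
      then have Sc: "card S = 2" "S \<subseteq> Bu" unfolding Q_def by auto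
      then obtain B1 B2 where B: "S = {B1, B2}" "B1 \<noteq> B2" by (auto simp: card_2_iff)
      have B12: "B1 \<in> BB" "B2 \<in> BB" using Sc B unfolding Bu_def by auto
      have sub: "B1 \<subseteq> A" "B2 \<subseteq> A" "B1 \<subseteq> A'" "B2 \<subseteq> A'" using S B unfolding Q_def by auto
      have "B1 \<union> B2 = A"
        using union_eq[of A r B1 B2] Ac[OF AA'(1)] Bc[OF B12(1)] Bc[OF B12(2)] sub B r3 by simp
      moreover have "B1 \<union> B2 = A'"
        using union_eq[of A' r B1 B2] Ac[OF AA'(2)] Bc[OF B12(1)] Bc[OF B12(2)] sub B r3 by simp
      ultimately show False using AA' by simp
    qed
    have Q3: "card (Q A) \<ge> 3" if A3A: "A \<in> A3" for A
    proof -
      obtain C where C: "C \<subseteq> Bu" "card C = 3" "\<forall>B\<in>C. B \<subseteq> A" using A3C[OF A3A] by blast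
      have fC: "finite C" using C(2) card.infinite by fastforce
      have "{S. S \<subseteq> C \<and> card S = 2} \<subseteq> Q A" unfolding Q_def using C by auto
      then have "card {S. S \<subseteq> C \<and> card S = 2} \<le> card (Q A)" using finQ by (intro card_mono) auto
      moreover have "card {S. S \<subseteq> C \<and> card S = 2} = 3" using n_subsets[OF fC, of 2] C(2) by (simp add: choose_two)
      ultimately show ?thesis by simp
    qed
    have Q2: "card (Q A) \<ge> 1" if A: "A \<in> A2" for A
    proof -
      have AAA: "A \<in> AA" "u \<in> A" using A unfolding A2_def by auto
      obtain C where C: "C \<subseteq> BB" "card C = 3" "\<forall>B\<in>C. B \<subseteq> A" using AC[OF AAA(1)] by blast
      have fC: "finite C" using C(2) card.infinite by fastforce
      have sub: "C - {A - {u}} \<subseteq> Bu"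
      proof
        fix B assume B: "B \<in> C - {A - {u}}"
        have "u \<in> B"
        proof (rule ccontr)
          assume "u \<notin> B"
          then have "B = A - {u}" using notu[of A B] AAA B C by blast
          then show False using B by auto
        qed
        then show "B \<in> Bu" using B C unfolding Bu_def by auto
      qed
      have "card (C - {A - {u}}) \<ge> 2" using C(2) fC by (simp add: card_Diff_singleton_if)
      then obtain S where S: "S \<subseteq> C - {A - {u}}" "card S = 2" by (metis obtain_subset_with_card_n)
      have "S \<in> Q A" unfolding Q_def using S sub C by auto
      then have "Q A \<noteq> {}" by auto
      then show ?thesis using finQ by (simp add: Suc_le_eq card_gt_0_iff)
    qed
    have "card (\<Union>(Q ` (A2 \<union> A3))) = (\<Sum>A\<in>A2 \<union> A3. card (Q A))"
    proof (rule card_UN_disjoint)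
      show "finite (A2 \<union> A3)" using finA by simp
      show "\<forall>i\<in>A2 \<union> A3. finite (Q i)" using finQ by simp
      show "\<forall>i\<in>A2 \<union> A3. \<forall>j\<in>A2 \<union> A3. i \<noteq> j \<longrightarrow> Q i \<inter> Q j = {}"
        using disj unfolding A2_def A3_def by blast
    qed
    also have "\<dots> = (\<Sum>A\<in>A2. card (Q A)) + (\<Sum>A\<in>A3. card (Q A))"
      using finA \<open>A2 \<inter> A3 = {}\<close> by (intro sum.union_disjoint) auto
    finally have eqsum: "card (\<Union>(Q ` (A2 \<union> A3))) = (\<Sum>A\<in>A2. card (Q A)) + (\<Sum>A\<in>A3. card (Q A))" .
    have s2: "card A2 * 1 \<le> (\<Sum>A\<in>A2. card (Q A))" using sum_bounded_below[of A2 1 "\<lambda>A. card (Q A)"] Q2 by simp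
    have s3: "card A3 * 3 \<le> (\<Sum>A\<in>A3. card (Q A))" using sum_bounded_below[of A3 3 "\<lambda>A. card (Q A)"] Q3 by simp
    have "card (\<Union>(Q ` (A2 \<union> A3))) \<le> card {S. S \<subseteq> Bu \<and> card S = 2}"
      using finBu by (intro card_mono) (auto simp: Q_def)
    also have "\<dots> = d choose 2" using n_subsets[OF finBu(1), of 2] d_def by simp
    finally have "3 * card A3 + card A2 \<le> d choose 2" using eqsum s2 s3 by linarith
    then have "real (3 * card A3 + card A2) \<le> real (d choose 2)" by (simp only: of_nat_le_iff)
    moreover have "real (d choose 2) = real d * (real d - 1) / 2"
      by (rule real_choose2)
    ultimately have pr: "3 * real (card A3) + real (card A2) \<le> real d * (real d - 1) / 2" by simp
    have bn: "real (card Bn) = real (card BB) - real d" using cardBB by simp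
    have "phi (real (card BB) - real d) + real (card A3) + real (card A2) \<le> phi (real (card BB))"
      by (rule key) (use c2 c3 pr bn dle in auto)
    then show ?thesis using cardAA c1 bn by simp
  qed
qed

theorem mainTheorem4:
  fixes r b :: nat and x :: real
  assumes "r \<ge> 3" and "x > 1" and "b > 0" and "real b = x * (x - 1) / 2"
  shows "f r 3 b \<le> ereal (x * (x - 1) * (x - 2) / 6)"
proof -
  have xb: "x*(x-1) = 2 * real b" using assms(4) by simp
  have z: "zz (real b) = x" using zz_unique[of x "real b", OF _ xb] assms(2) by simp
  have ph: "phi (real b) = x * (x - 1) * (x - 2) / 6" unfolding phi_def z ..
  show ?thesis
    unfolding f_def
  proof (rule Sup_least)
    fix y assume "y \<in> {ereal (real (card AA)) | AA BB. finite AA \<and> admissible r 3 b AA BB}"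
    then obtain AA BB where y: "y = ereal (real (card AA))" and fin: "finite AA"
      and adm: "admissible r 3 b AA BB" by blast
    have "good r AA BB" using adm fin unfolding admissible_def good_def ksubsets_def by blast
    then have "real (card AA) \<le> phi (real (card BB))" by (rule main)
    moreover have "card BB = b" using adm unfolding admissible_def by simp
    ultimately show "y \<le> ereal (x * (x - 1) * (x - 2) / 6)" using y ph by simp
  qed
qed

end
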